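(* Let $f \colon \mathbb{R} \to \mathbb{R}$ be given by $f(x) = \ln\big(\frac{\sinh x}{x}\big) - \frac{x^2}{6}$ for $x \neq 0$ and $f(0) = 0$. Then $$\frac{f(q)}{p} - \frac{f(p)}{q} + \Big(\frac{1}{q} - \frac{1}{p}\Big) f(p-q) \ge 0$$ for all $p, q \in \mathbb{R} \setminus \{0\}$ with $q \le p$. For $p, q \in \mathbb{R}\setminus\{0\}$ with $p \le q$, the reverse inequality ($\le 0$) holds. *)

theory Defs
  imports Complex_Main
begin

definition f :: "real \<Rightarrow> real" where
  "f x = (if x = 0 then 0 else ln (sinh x / x) - x ^ 2 / 6)"

end

theory Submission
  imports Defs
begin

lemma psi_nonneg:
  fixes x :: real assumes "0 \<le> x" shows "0 \<le> x * cosh x - sinh x"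
proof -
  have "(\<lambda>t. t * cosh t - sinh t) 0 \<le> (\<lambda>t. t * cosh t - sinh t) x"
  proof (rule DERIV_nonneg_imp_nondecreasing[OF assms])
    fix t :: real assume "0 \<le> t" "t \<le> x"
    show "\<exists>y. ((\<lambda>t. t * cosh t - sinh t) has_real_derivative y) (at t) \<and> y \<ge> 0"
      apply (rule exI[of _ "t * sinh t"])
      apply (intro conjI)
       apply (rule derivative_eq_intros refl | simp)+
      using \<open>0 \<le> t\<close> by simp
  qed
  then show ?thesis by simp
qed

lemma phi_nonneg:
  fixes x :: real assumes "0 \<le> x" shows "3 * x * cosh x \<le> (3 + x^2) * sinh x"
proof -
  have "(\<lambda>t. (3 + t^2) * sinh t - 3 * t * cosh t) 0 \<le> (\<lambda>t. (3 + t^2) * sinh t - 3 * t * cosh t) x"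
  proof (rule DERIV_nonneg_imp_nondecreasing[OF assms])
    fix t :: real assume "0 \<le> t" "t \<le> x"
    show "\<exists>y. ((\<lambda>t. (3 + t^2) * sinh t - 3 * t * cosh t) has_real_derivative y) (at t) \<and> y \<ge> 0"
      apply (rule exI[of _ "t * (t * cosh t - sinh t)"])
      apply (intro conjI)
       apply (rule derivative_eq_intros refl | simp)+
       apply (simp add: algebra_simps power2_eq_square)
      using \<open>0 \<le> t\<close> psi_nonneg[OF \<open>0 \<le> t\<close>] by simp
  qed
  then show ?thesis by simp
qed

lemma f_antimono:
  fixes a b :: real assumes "0 < a" "a \<le> b" shows "f b \<le> f a"
proof -
  let ?h = "\<lambda>t. ln (sinh t) - ln t - t^2/6"
  have eq: "f t = ?h t" if "t > 0" for t
    using that by (simp add: f_def ln_div)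
  have "?h b \<le> ?h a"
  proof (rule DERIV_nonpos_imp_nonincreasing[OF assms(2)])
    fix t :: real assume t: "a \<le> t" "t \<le> b"
    then have tp: "t > 0" using assms by simp
    have sp: "sinh t > 0" using tp by simp
    show "\<exists>y. (?h has_real_derivative y) (at t) \<and> y \<le> 0"
    proof (rule exI[of _ "cosh t / sinh t - 1 / t - t / 3"], intro conjI)
      show "(?h has_real_derivative cosh t / sinh t - 1 / t - t / 3) (at t)"
        by (rule derivative_eq_intros refl | use sp tp in simp)+
      have "3 * t * cosh t \<le> (3 + t^2) * sinh t" using phi_nonneg tp by simp
      then have "cosh t / sinh t \<le> (3 + t^2) / (3 * t)"
        using sp tp by (simp add: divide_simps mult.commute)
      also have "\<dots> = 1 / t + t / 3" using tp by (simp add: field_simps power2_eq_square)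
      finally show "cosh t / sinh t - 1 / t - t / 3 \<le> 0" by linarith
    qed
  qed
  then show ?thesis using eq assms by simp
qed

lemma f_even: "f (- x) = f x"
  by (simp add: f_def)

lemma g_sub:
  fixes a b :: real assumes "0 \<le> a" "0 \<le> b"
  shows "(a + b) * f (a + b) \<le> a * f a + b * f b"
proof (cases "a = 0 \<or> b = 0")
  case True then show ?thesis by auto
next
  case False
  then have ap: "a > 0" and bp: "b > 0" using assms by auto
  have "f (a+b) \<le> f a" using f_antimono ap bp by simp
  moreover have "f (a+b) \<le> f b" using f_antimono ap bp by simp
  ultimately have "a * f (a+b) \<le> a * f a" "b * f (a+b) \<le> b * f b"
    using ap bp by (simp_all add: mult_left_mono)
  then show ?thesis by (simp add: distrib_right)
qed

theorem mainTheorem3: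
  fixes p q :: real
  assumes "p \<noteq> 0" and "q \<noteq> 0"
  shows "(q \<le> p \<longrightarrow> f q / p - f p / q + (1 / q - 1 / p) * f (p - q) \<ge> 0) \<and>
         (p \<le> q \<longrightarrow> f q / p - f p / q + (1 / q - 1 / p) * f (p - q) \<le> 0)"
proof -
  define g where "g x = x * f x" for x
  have godd: "g (- x) = - g x" for x by (simp add: g_def f_even)
  have sub: "g (a + b) \<le> g a + g b" if "0 \<le> a" "0 \<le> b" for a b
    using g_sub[OF that] by (simp add: g_def)
  define S where "S = g q - g p + g (p - q)"
  have E: "f q / p - f p / q + (1 / q - 1 / p) * f (p - q) = S / (p * q)"
    using assms by (simp add: S_def g_def field_simps)
  have sq: "p - q = - (q - p)" by simp
  show ?thesis unfolding E
  proof (intro conjI impI)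
    assume "q \<le> p"
    consider "0 < q" | "q < 0" "0 < p" | "p < 0" using assms \<open>q \<le> p\<close> by linarith
    then show "S / (p * q) \<ge> 0"
    proof cases
      case 1
      then have "g p \<le> g q + g (p - q)" using sub[of q "p - q"] \<open>q \<le> p\<close> by simp
      then show ?thesis using 1 \<open>q \<le> p\<close> by (simp add: S_def)
    next
      case 2
      then have "g (p - q) \<le> g p + g (- q)" using sub[of p "- q"] by simp
      then have "S \<le> 0" using godd[of q] by (simp add: S_def)
      then show ?thesis using 2 by (simp add: divide_nonpos_neg mult_pos_neg)
    next
      case 3
      then have "g (- q) \<le> g (- p) + g (p - q)" using sub[of "- p" "p - q"] \<open>q \<le> p\<close> by simp
      then have "S \<ge> 0" using godd[of q] godd[of p] by (simp add: S_def)
      moreover have "p * q > 0" using 3 \<open>q \<le> p\<close> by (intro mult_neg_neg) auto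
      ultimately show ?thesis by simp
    qed
  next
    assume "p \<le> q"
    consider "0 < p" | "p < 0" "0 < q" | "q < 0" using assms \<open>p \<le> q\<close> by linarith
    then show "S / (p * q) \<le> 0"
    proof cases
      case 1
      then have "g q \<le> g p + g (q - p)" using sub[of p "q - p"] \<open>p \<le> q\<close> by simp
      then have "S \<le> 0" using godd[of "q - p"] by (simp add: S_def)
      then show ?thesis using 1 \<open>p \<le> q\<close> by (simp add: divide_nonpos_pos)
    next
      case 2
      then have "g (q - p) \<le> g q + g (- p)" using sub[of q "- p"] by simp
      then have "S \<ge> 0" using godd[of p] godd[of "q - p"] by (simp add: S_def)
      moreover have "p * q < 0" using 2 by (simp add: mult_neg_pos)
      ultimately show ?thesis by (simp add: divide_nonneg_neg)
    next
      case 3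
      then have "g (- p) \<le> g (- q) + g (q - p)" using sub[of "- q" "q - p"] \<open>p \<le> q\<close> by simp
      then have "S \<le> 0" using godd[of q] godd[of p] godd[of "q - p"] by (simp add: S_def)
      then show ?thesis using 3 \<open>p \<le> q\<close> by (simp add: divide_nonpos_pos mult_neg_neg)
    qed
  qed
qed

end
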